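(* Let $\epsilon>0$, let $\Lambda_\epsilon\subset\mathbb{R}^d$ be an $\epsilon$-lattice with fixed basis $\mathbf{b}_1,\dots,\mathbf{b}_d$, and let $q$ be a positive integer. For any points $\boldsymbol\lambda_1\neq\boldsymbol\lambda_2\in\Lambda_\epsilon$ with $c_q(\boldsymbol\lambda_1)=c_q(\boldsymbol\lambda_2)$, we have $\|\boldsymbol\lambda_1-\boldsymbol\lambda_2\|\ge 2q\epsilon$.
   Context: $\|\cdot\|$ is a fixed one of the $\ell_1,\ell_2,\ell_\infty$ norms, and balls $B_r(\mathbf{x})$ are with respect to it. A lattice is the set of integer combinations of a basis $\mathbf{b}_1,\dots,\mathbf{b}_d$ of $\mathbb{R}^d$. Its packing radius $r_p$ is the supremum of $r$ such that $B_r(\boldsymbol\lambda)\cap B_r(\boldsymbol\lambda')=\emptyset$ for all distinct lattice points; its cover radius $r_c$ is the infimum of $r$ such that the balls $B_r(\boldsymbol\lambda)$ over lattice points cover $\mathbb{R}^d$. An $\epsilon$-lattice is a lattice with $\epsilon=r_p\le r_c\le 3\epsilon$. The coloring $c_q$: writing $\boldsymbol\lambda=\sum_i\alpha_i\mathbf{b}_i$ with $\alpha_i\in\mathbb{Z}$, set $c_q(\boldsymbol\lambda)=(\alpha_1\bmod q,\dots,\alpha_d\bmod q)$. *)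

theory Defs
  imports "HOL-Analysis.Analysis"
begin

datatype normkind = L1 | L2 | Linf

definition pnorm :: "normkind \<Rightarrow> real ^ 'n \<Rightarrow> real" where
  "pnorm k x = (case k of
      L1 \<Rightarrow> (\<Sum>i\<in>UNIV. \<bar>x $ i\<bar>)
    | L2 \<Rightarrow> norm x
    | Linf \<Rightarrow> Max (range (\<lambda>i. \<bar>x $ i\<bar>)))"

definition pball :: "normkind \<Rightarrow> real ^ 'n \<Rightarrow> real \<Rightarrow> (real ^ 'n) set" where
  "pball k x r = {y. pnorm k (y - x) \<le> r}"

definition is_basis :: "('n \<Rightarrow> real ^ 'n) \<Rightarrow> bool" where
  "is_basis b \<longleftrightarrow> inj b \<and> independent (range b) \<and> span (range b) = UNIV"

definition lat_comb :: "('n \<Rightarrow> real ^ 'n) \<Rightarrow> ('n \<Rightarrow> int) \<Rightarrow> real ^ 'n" where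
  "lat_comb b \<alpha> = (\<Sum>i\<in>UNIV. of_int (\<alpha> i) *\<^sub>R b i)"

definition lattice :: "('n \<Rightarrow> real ^ 'n) \<Rightarrow> (real ^ 'n) set" where
  "lattice b = range (lat_comb b)"

definition packing_radius :: "normkind \<Rightarrow> ('n \<Rightarrow> real ^ 'n) \<Rightarrow> real" where
  "packing_radius k b = Sup {r. \<forall>l\<in>lattice b. \<forall>l'\<in>lattice b. l \<noteq> l' \<longrightarrow>
                                   pball k l r \<inter> pball k l' r = {}}"

definition cover_radius :: "normkind \<Rightarrow> ('n \<Rightarrow> real ^ 'n) \<Rightarrow> real" where
  "cover_radius k b = Inf {r. (\<Union>l\<in>lattice b. pball k l r) = UNIV}"

definition eps_lattice :: "normkind \<Rightarrow> real \<Rightarrow> ('n \<Rightarrow> real ^ 'n) \<Rightarrow> bool" where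
  "eps_lattice k \<epsilon> b \<longleftrightarrow> is_basis b \<and> packing_radius k b = \<epsilon> \<and>
     \<epsilon> \<le> cover_radius k b \<and> cover_radius k b \<le> 3 * \<epsilon>"

definition coords :: "('n \<Rightarrow> real ^ 'n) \<Rightarrow> real ^ 'n \<Rightarrow> ('n \<Rightarrow> int)" where
  "coords b l = (THE \<alpha>. lat_comb b \<alpha> = l)"

definition coloring :: "int \<Rightarrow> ('n \<Rightarrow> real ^ 'n) \<Rightarrow> real ^ 'n \<Rightarrow> ('n \<Rightarrow> int)" where
  "coloring q b l = (\<lambda>i. coords b l i mod q)"

end

theory Submission
  imports Defs
begin

lemma pnorm_nonneg: "pnorm k x \<ge> 0"
proof (cases k)
  case Linf
  have "\<bar>x $ undefined\<bar> \<le> Max (range (\<lambda>i. \<bar>x $ i\<bar>))" by (rule Max_ge) auto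
  then have "0 \<le> Max (range (\<lambda>i. \<bar>x $ i\<bar>))" by (meson abs_ge_zero order_trans)
  then show ?thesis using Linf by (simp add: pnorm_def)
qed (auto simp: pnorm_def sum_nonneg)

lemma pnorm_scale: assumes "c \<ge> 0" shows "pnorm k (c *\<^sub>R x) = c * pnorm k x"
proof (cases k)
  case L1 then show ?thesis using assms by (simp add: pnorm_def abs_mult sum_distrib_left)
next
  case L2 then show ?thesis using assms by (simp add: pnorm_def)
next
  case Linf
  have m: "mono ((*) c)" using assms by (simp add: mono_def mult_left_mono)
  have "c * Max (range (\<lambda>i. \<bar>x $ i\<bar>)) = Max ((*) c ` range (\<lambda>i. \<bar>x $ i\<bar>))"
    by (rule mono_Max_commute[OF m]) auto
  also have "(*) c ` range (\<lambda>i. \<bar>x $ i\<bar>) = range (\<lambda>i. \<bar>(c *\<^sub>R x) $ i\<bar>)"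
    using assms by (auto simp: abs_mult image_image)
  finally show ?thesis using Linf by (simp add: pnorm_def)
qed

lemma pnorm_minus: "pnorm k (- x) = pnorm k x"
  by (cases k) (auto simp: pnorm_def)

lemma pnorm_sym: "pnorm k (x - y) = pnorm k (y - x)"
  using pnorm_minus[of k "x - y"] by simp

lemma sep:
  assumes "l \<in> lattice b" "l' \<in> lattice b" "l \<noteq> l'"
  shows "2 * packing_radius k b \<le> pnorm k (l - l')"
proof -
  let ?S = "{r. \<forall>l\<in>lattice b. \<forall>l'\<in>lattice b. l \<noteq> l' \<longrightarrow> pball k l r \<inter> pball k l' r = {}}"
  have ne: "-1 \<in> ?S"
  proof -
    have "pball k x (-1) = {}" for x
    proof -
      have "\<not> pnorm k (y - x) \<le> -1" for y using pnorm_nonneg[of k "y - x"] by linarith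
      then show ?thesis unfolding pball_def by blast
    qed
    then show ?thesis by auto
  qed
  have bd: "r \<le> pnorm k (l - l') / 2" if "r \<in> ?S" for r
  proof (rule ccontr)
    assume nt: "\<not> ?thesis"
    let ?m = "(1/2) *\<^sub>R (l + l')"
    have e1: "?m - l = (1/2) *\<^sub>R (l' - l)" by (simp add: vec_eq_iff field_simps)
    have e2: "?m - l' = (1/2) *\<^sub>R (l - l')" by (simp add: vec_eq_iff field_simps)
    have "?m \<in> pball k l r" "?m \<in> pball k l' r"
      unfolding pball_def mem_Collect_eq e1 e2
      using nt pnorm_sym[of k l' l] pnorm_scale[of "1/2" k "l - l'"] pnorm_scale[of "1/2" k "l' - l"] by auto
    then show False using that assms by blast
  qed
  have "packing_radius k b \<le> pnorm k (l - l') / 2"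
    unfolding packing_radius_def by (rule cSup_least) (use ne bd in auto)
  then show ?thesis by simp
qed

lemma lat_comb_inj:
  assumes "is_basis b" "lat_comb b \<alpha> = lat_comb b \<beta>"
  shows "\<alpha> = \<beta>"
proof -
  have ind: "independent (range b)" and ib: "inj b" using assms(1) by (auto simp: is_basis_def)
  define c where "c i = real_of_int (\<alpha> i) - real_of_int (\<beta> i)" for i
  have "(\<Sum>i\<in>UNIV. c i *\<^sub>R b i) = lat_comb b \<alpha> - lat_comb b \<beta>"
    by (simp add: lat_comb_def c_def scaleR_diff_left sum_subtractf)
  also have "\<dots> = 0" using assms(2) by simp
  finally have z: "(\<Sum>i\<in>UNIV. c i *\<^sub>R b i) = 0" .
  have "(\<Sum>v\<in>range b. (c (inv b v)) *\<^sub>R v) = (\<Sum>i\<in>UNIV. c i *\<^sub>R b i)"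
    by (subst sum.reindex[OF ib]) (simp add: ib)
  then have z2: "(\<Sum>v\<in>range b. (c (inv b v)) *\<^sub>R v) = 0" using z by simp
  have "c i = 0" for i
    using independentD[OF ind _ _ z2, of "b i"] ib by simp
  then show ?thesis by (auto simp: c_def)
qed

lemma coords_eq: assumes "is_basis b" shows "coords b (lat_comb b \<alpha>) = \<alpha>"
  unfolding coords_def using lat_comb_inj[OF assms] by blast

theorem lemma12:
  fixes k :: normkind and \<epsilon> :: real and b :: "'n \<Rightarrow> real ^ 'n" and q :: int
    and l1 l2 :: "real ^ 'n"
  assumes "\<epsilon> > 0" and "eps_lattice k \<epsilon> b" and "q > 0"
    and "l1 \<in> lattice b" and "l2 \<in> lattice b" and "l1 \<noteq> l2"
    and "coloring q b l1 = coloring q b l2"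
  shows "pnorm k (l1 - l2) \<ge> 2 * of_int q * \<epsilon>"
proof -
  have B: "is_basis b" and P: "packing_radius k b = \<epsilon>" using assms(2) by (auto simp: eps_lattice_def)
  obtain \<alpha>1 \<alpha>2 where a1: "l1 = lat_comb b \<alpha>1" and a2: "l2 = lat_comb b \<alpha>2"
    using assms(4,5) by (auto simp: lattice_def)
  have "\<alpha>1 i mod q = \<alpha>2 i mod q" for i
    using assms(7) unfolding coloring_def a1 a2 coords_eq[OF B] by meson
  then have "\<exists>t. \<alpha>1 i - \<alpha>2 i = q * t" for i
    by (metis dvd_def mod_eq_dvd_iff)
  then obtain \<beta> where be: "\<And>i. \<alpha>1 i - \<alpha>2 i = q * \<beta> i" by metis
  have "l1 - l2 = (\<Sum>i\<in>UNIV. (real_of_int (\<alpha>1 i) - real_of_int (\<alpha>2 i)) *\<^sub>R b i)"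
    by (simp add: a1 a2 lat_comb_def scaleR_diff_left sum_subtractf)
  also have "\<dots> = (\<Sum>i\<in>UNIV. (real_of_int q * real_of_int (\<beta> i)) *\<^sub>R b i)"
    by (rule sum.cong) (auto simp flip: of_int_diff of_int_mult simp: be)
  also have "\<dots> = real_of_int q *\<^sub>R lat_comb b \<beta>"
    by (simp add: lat_comb_def scaleR_sum_right)
  finally have d: "l1 - l2 = real_of_int q *\<^sub>R lat_comb b \<beta>" .
  have v: "lat_comb b \<beta> \<in> lattice b" and z: "lat_comb b (\<lambda>_. 0) \<in> lattice b"
    by (auto simp: lattice_def)
  have z0: "lat_comb b (\<lambda>_. 0) = 0" by (simp add: lat_comb_def)
  have "lat_comb b \<beta> \<noteq> 0" using d assms(6) by auto
  then have "2 * \<epsilon> \<le> pnorm k (lat_comb b \<beta>)"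
    using sep[OF v z, of k] P z0 by simp
  then have "real_of_int q * (2 * \<epsilon>) \<le> real_of_int q * pnorm k (lat_comb b \<beta>)"
    using assms(3) by simp
  then show ?thesis using d assms(3) by (simp add: pnorm_scale)
qed

end
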